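(* Assume the standing hypotheses (H). Let $A$ be a part of $G$ with $|A|=4$, and let $L_A$ be the set of colors $c$ such that $c\in L(u)\cap L(v)$ for some good pair $\{u,v\}$ for $A$. Then $|L_A|\ge k_3+k_4$.
   Context: A list assignment $L$ assigns to each vertex $v$ a set $L(v)$ of colors; an $L$-coloring is a proper coloring $f$ with $f(v)\in L(v)$ for all $v$; $\mathrm{ch}$ denotes choice number and $\chi$ chromatic number. A part of a complete multipartite graph is one of its maximal stable sets. Standing hypotheses (H): $k\ge1$ and $n\ge 2k+2$ are integers; $G$ is a complete $k$-partite graph (exactly $k$ nonempty parts) on $n$ vertices; $L$ is a list assignment for $G$ with $|L(v)|\ge\lceil (n+k-1)/3\rceil$ for every vertex $v$; $G$ has no $L$-coloring; $\left|\bigcup_{v\in V(G)}L(v)\right|\le n-1$; and every graph $H$ with fewer than $n$ vertices satisfies $\mathrm{ch}(H)\le\max\{\chi(H),\lceil(|V(H)|+\chi(H)-1)/3\rceil\}$. For $i\in\{1,2,3,4\}$, $k_i$ denotes the number of parts of $G$ of size $i$. For a part $A$ with $|A|\ge3$, a pair $\{u,v\}\subseteq A$ of distinct vertices is a good pair for $A$ if either $|A|=3$ and $|L(u)\cap L(v)|\ge\frac{k_1+k_4+1}{3}$, or $|A|=4$ and $|L(u)\cap L(v)|\ge|L(w)\cap L(z)|$ where $\{w,z\}=A\setminus\{u,v\}$. *)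

theory Defs
  imports Complex_Main
begin

text \<open>Simple graphs are given by a finite vertex set and a symmetric, irreflexive
  edge relation (only edges between vertices of the vertex set matter).\<close>

definition simple_graph :: "'v set \<Rightarrow> ('v \<Rightarrow> 'v \<Rightarrow> bool) \<Rightarrow> bool" where
  "simple_graph V E \<longleftrightarrow> finite V \<and> (\<forall>u v. E u v \<longrightarrow> E v u) \<and> (\<forall>v. \<not> E v v)"

definition proper_coloring :: "'v set \<Rightarrow> ('v \<Rightarrow> 'v \<Rightarrow> bool) \<Rightarrow> ('v \<Rightarrow> 'c) \<Rightarrow> bool" where
  "proper_coloring V E f \<longleftrightarrow> (\<forall>u\<in>V. \<forall>v\<in>V. E u v \<longrightarrow> f u \<noteq> f v)"

definition L_coloring :: "'v set \<Rightarrow> ('v \<Rightarrow> 'v \<Rightarrow> bool) \<Rightarrow> ('v \<Rightarrow> 'c set) \<Rightarrow> ('v \<Rightarrow> 'c) \<Rightarrow> bool" where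
  "L_coloring V E L f \<longleftrightarrow> proper_coloring V E f \<and> (\<forall>v\<in>V. f v \<in> L v)"

definition colorable :: "'v set \<Rightarrow> ('v \<Rightarrow> 'v \<Rightarrow> bool) \<Rightarrow> nat \<Rightarrow> bool" where
  "colorable V E k \<longleftrightarrow> (\<exists>f :: 'v \<Rightarrow> nat. proper_coloring V E f \<and> f ` V \<subseteq> {..<k})"

definition chromatic_number :: "'v set \<Rightarrow> ('v \<Rightarrow> 'v \<Rightarrow> bool) \<Rightarrow> nat" where
  "chromatic_number V E = (LEAST k. colorable V E k)"

text \<open>k-choosable: every assignment of (finite) lists of size at least k admits an
  L-coloring. Colors are natural numbers (no loss of generality for finite lists).\<close>
definition choosable :: "'v set \<Rightarrow> ('v \<Rightarrow> 'v \<Rightarrow> bool) \<Rightarrow> nat \<Rightarrow> bool" where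
  "choosable V E k \<longleftrightarrow>
     (\<forall>L :: 'v \<Rightarrow> nat set. (\<forall>v\<in>V. finite (L v) \<and> card (L v) \<ge> k)
        \<longrightarrow> (\<exists>f. L_coloring V E L f))"

definition choice_number :: "'v set \<Rightarrow> ('v \<Rightarrow> 'v \<Rightarrow> bool) \<Rightarrow> nat" where
  "choice_number V E = (LEAST k. choosable V E k)"

text \<open>A complete multipartite graph given by its family of parts P:
  the vertex set is the union of P and two vertices are adjacent iff
  they lie in different parts.\<close>

definition partition_of :: "'a set set \<Rightarrow> 'a set \<Rightarrow> bool" where
  "partition_of P V \<longleftrightarrow> finite V \<and> \<Union>P = V \<and> {} \<notin> P \<and>
     (\<forall>X\<in>P. \<forall>Y\<in>P. X \<noteq> Y \<longrightarrow> X \<inter> Y = {})"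

definition cmp_edge :: "'a set set \<Rightarrow> 'a \<Rightarrow> 'a \<Rightarrow> bool" where
  "cmp_edge P u v \<longleftrightarrow> u \<in> \<Union>P \<and> v \<in> \<Union>P \<and> \<not> (\<exists>X\<in>P. u \<in> X \<and> v \<in> X)"

definition num_parts :: "'a set set \<Rightarrow> nat \<Rightarrow> nat" where
  "num_parts P i = card {X\<in>P. card X = i}"

definition good_pair :: "'a set set \<Rightarrow> ('a \<Rightarrow> 'c set) \<Rightarrow> 'a set \<Rightarrow> 'a \<Rightarrow> 'a \<Rightarrow> bool" where
  "good_pair P L A u v \<longleftrightarrow> u \<in> A \<and> v \<in> A \<and> u \<noteq> v \<and>
     ((card A = 3 \<and> real (card (L u \<inter> L v)) \<ge> (real (num_parts P 1) + real (num_parts P 4) + 1) / 3)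
      \<or> (card A = 4 \<and> (\<forall>w z. A - {u, v} = {w, z} \<longrightarrow> card (L u \<inter> L v) \<ge> card (L w \<inter> L z))))"

end

theory Submission
  imports Defs
begin


lemma greedy:
  assumes "finite W" "\<forall>v. \<not> F v v"
  shows "(\<forall>v\<in>W. finite (L v) \<and> card (L v) \<ge> card W) \<Longrightarrow> \<exists>f. L_coloring W F L f"
  using assms(1)
proof (induction W rule: finite_induct)
  case empty
  then show ?case by (auto simp: L_coloring_def proper_coloring_def)
next
  case (insert x W)
  then have "\<forall>v\<in>W. finite (L v) \<and> card (L v) \<ge> card W" by auto
  with insert.IH obtain f where f: "L_coloring W F L f" by blast
  have "card (f ` W) \<le> card W" by (rule card_image_le) (use insert in auto)
  also have "\<dots> < card (insert x W)" using insert by simp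
  also have "\<dots> \<le> card (L x)" using insert.prems by auto
  finally have lt: "card (f ` W) < card (L x)" .
  have "\<not> L x \<subseteq> f ` W"
  proof
    assume "L x \<subseteq> f ` W"
    then have "card (L x) \<le> card (f ` W)" by (intro card_mono) (use insert in auto)
    with lt show False by simp
  qed
  then obtain col where col: "col \<in> L x" "col \<notin> f ` W" by blast
  let ?f = "f(x := col)"
  have "L_coloring (insert x W) F L ?f"
    using f col insert(2) assms(2) unfolding L_coloring_def proper_coloring_def
    by (auto; metis image_eqI)+
  then show ?case by blast
qed

lemma choosable_card:
  assumes "simple_graph W F"
  shows "choosable W F (card W)"
  using assms greedy unfolding simple_graph_def choosable_def by blast

lemma choosable_mono: "choosable W F a \<Longrightarrow> a \<le> b \<Longrightarrow> choosable W F b"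
  unfolding choosable_def by (meson order_trans)

lemma choosable_choice_number:
  assumes "simple_graph W F"
  shows "choosable W F (choice_number W F)"
  unfolding choice_number_def by (rule LeastI, rule choosable_card[OF assms])



lemma triple_coloring:
  fixes P :: "'a set set" and L :: "'a \<Rightarrow> 'c set" and n k :: nat and t :: int
  assumes part: "partition_of P (\<Union>P)"
    and n_def: "n = card (\<Union>P)"
    and k_def: "k = card P"
    and lists: "\<forall>v\<in>\<Union>P. of_nat (card (L v)) \<ge> t"
    and tk: "t \<ge> int k + 1"
    and tn: "t - 1 \<ge> \<lceil>(real (n - 3) + real k - 1) / 3\<rceil>"
    and fin_colors: "finite (\<Union>v\<in>\<Union>P. L v)"
    and minimal: "\<forall>(W :: nat set) F. simple_graph W F \<and> card W < n \<longrightarrow>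
        int (choice_number W F) \<le> max (int (chromatic_number W F))
           \<lceil>(real (card W) + real (chromatic_number W F) - 1) / 3\<rceil>"
    and X: "X \<in> P" "x \<in> X" "y \<in> X" "z \<in> X" "x \<noteq> y" "x \<noteq> z" "y \<noteq> z"
    and col: "col \<in> L x" "col \<in> L y" "col \<in> L z"
  shows "\<exists>f. L_coloring (\<Union>P) (cmp_edge P) L f"
proof -
  define C where "C = (\<Union>v\<in>\<Union>P. L v)"
  define V' where "V' = \<Union>P - {x, y, z}"
  have finU: "finite (\<Union>P)" using part by (simp add: partition_of_def)
  have finP: "finite P" using finU by (simp add: finite_UnionD)
  have finV': "finite V'" using finU by (simp add: V'_def)
  have xyzU: "{x,y,z} \<subseteq> \<Union>P" using X by auto
  have cardV': "card V' = n - 3"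
    unfolding V'_def n_def using finU xyzU X by (simp add: card_Diff_subset)
  have c3: "card {x,y,z} = 3" using X by simp
  have n3: "n \<ge> 3" unfolding n_def using card_mono[OF finU xyzU] c3 by simp
  obtain g :: "'a \<Rightarrow> nat" and m :: nat where g: "g ` V' = {i. i < m}" "inj_on g V'"
    using finite_imp_inj_to_nat_seg[OF finV'] by blast
  obtain h :: "'c \<Rightarrow> nat" and m' :: nat where h: "inj_on h C"
    using finite_imp_inj_to_nat_seg[OF fin_colors[folded C_def]] by blast
  obtain p :: "'a set \<Rightarrow> nat" and kk :: nat where p: "p ` P = {i. i < kk}" "inj_on p P"
    using finite_imp_inj_to_nat_seg[OF finP] by blast
  have kk: "kk = k" unfolding k_def using p card_image[OF p(2)] by simp
  define W where "W = g ` V'"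
  define F where "F = (\<lambda>i j. \<exists>u\<in>V'. \<exists>v\<in>V'. i = g u \<and> j = g v \<and> cmp_edge P u v)"
  have sg: "simple_graph W F"
    unfolding simple_graph_def
  proof (intro conjI allI impI)
    show "finite W" using finV' by (simp add: W_def)
  next
    fix u v assume "F u v" then show "F v u" unfolding F_def cmp_edge_def by blast
  next
    fix v show "\<not> F v v"
    proof
      assume "F v v"
      then obtain u u' where uu: "u \<in> V'" "u' \<in> V'" "g u = g u'" "cmp_edge P u u'"
        unfolding F_def by blast
      then have "u = u'" using g(2) by (meson inj_onD)
      with uu(4) show False unfolding cmp_edge_def by blast
    qed
  qed
  have cardW: "card W = n - 3" unfolding W_def using card_image[OF g(2)] cardV' by simp
  have Wn: "card W < n" using cardW n3 by simp
  define gi where "gi = inv_into V' g"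
  have gi: "\<And>v. v \<in> V' \<Longrightarrow> gi (g v) = v" unfolding gi_def using g(2) by simp
  have colorable: "colorable W F k"
    unfolding colorable_def
  proof (intro exI conjI)
    define cf where "cf = (\<lambda>i. p (SOME Y. Y \<in> P \<and> gi i \<in> Y))"
    show "proper_coloring W F cf"
      unfolding proper_coloring_def
    proof (intro ballI impI)
      fix i j assume ij: "i \<in> W" "j \<in> W" "F i j"
      then obtain u v where uv: "u \<in> V'" "v \<in> V'" "i = g u" "j = g v" "cmp_edge P u v"
        unfolding F_def by blast
      have eu: "\<exists>Y. Y \<in> P \<and> u \<in> Y" using uv(1) unfolding V'_def by blast
      have ev: "\<exists>Y. Y \<in> P \<and> v \<in> Y" using uv(2) unfolding V'_def by blast
      define Yu where "Yu = (SOME Y. Y \<in> P \<and> u \<in> Y)"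
      define Yv where "Yv = (SOME Y. Y \<in> P \<and> v \<in> Y)"
      have Yu: "Yu \<in> P" "u \<in> Yu" unfolding Yu_def using someI_ex[OF eu] by auto
      have Yv: "Yv \<in> P" "v \<in> Yv" unfolding Yv_def using someI_ex[OF ev] by auto
      have "cf i = p Yu" "cf j = p Yv" unfolding cf_def Yu_def Yv_def using uv gi by auto
      moreover have "Yu \<noteq> Yv" using Yu Yv uv(5) unfolding cmp_edge_def by blast
      ultimately show "cf i \<noteq> cf j" using p(2) Yu Yv by (metis inj_onD)
    qed
    show "cf ` W \<subseteq> {..<k}"
    proof
      fix c assume "c \<in> cf ` W"
      then obtain u where u: "u \<in> V'" "c = cf (g u)" unfolding W_def by blast
      have eu: "\<exists>Y. Y \<in> P \<and> u \<in> Y" using u(1) unfolding V'_def by blast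
      have "(SOME Y. Y \<in> P \<and> u \<in> Y) \<in> P" using someI_ex[OF eu] by auto
      then have "c \<in> p ` P" using u gi unfolding cf_def by auto
      then show "c \<in> {..<k}" using p(1) kk by auto
    qed
  qed
  have chi: "chromatic_number W F \<le> k"
    unfolding chromatic_number_def by (rule Least_le, rule colorable)
  have "int (choice_number W F) \<le> max (int (chromatic_number W F))
           \<lceil>(real (card W) + real (chromatic_number W F) - 1) / 3\<rceil>"
    using minimal sg Wn by blast
  also have "\<dots> \<le> t - 1"
  proof (rule max.boundedI)
    show "int (chromatic_number W F) \<le> t - 1" using chi tk by simp
    have "\<lceil>(real (card W) + real (chromatic_number W F) - 1) / 3\<rceil>
          \<le> \<lceil>(real (n - 3) + real k - 1) / 3\<rceil>"
      using chi cardW by (intro ceiling_mono) (simp add: divide_right_mono)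
    then show "\<lceil>(real (card W) + real (chromatic_number W F) - 1) / 3\<rceil> \<le> t - 1"
      using tn by linarith
  qed
  finally have cn: "choice_number W F \<le> nat (t - 1)" by linarith
  have ch: "choosable W F (nat (t - 1))"
    using choosable_mono[OF choosable_choice_number[OF sg] cn] .
  define L2 where "L2 = (\<lambda>i. h ` (L (gi i) - {col}))"
  have LC: "\<And>v. v \<in> \<Union>P \<Longrightarrow> L v \<subseteq> C" unfolding C_def by blast
  have finL: "\<And>v. v \<in> \<Union>P \<Longrightarrow> finite (L v)"
    using LC fin_colors C_def finite_subset by metis
  have "\<forall>i\<in>W. finite (L2 i) \<and> card (L2 i) \<ge> nat (t - 1)"
  proof
    fix i assume "i \<in> W"
    then obtain v where v: "v \<in> V'" "i = g v" unfolding W_def by blast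
    have vU: "v \<in> \<Union>P" using v unfolding V'_def by blast
    have L2v: "L2 i = h ` (L v - {col})" unfolding L2_def using v gi by simp
    have injv: "inj_on h (L v - {col})" using h LC[OF vU] by (meson Diff_subset inj_on_subset)
    have "card (L2 i) = card (L v - {col})" using L2v card_image[OF injv] by simp
    moreover have "card (L v - {col}) \<ge> card (L v) - 1"
      by (simp add: card_Diff_singleton_if)
    moreover have "int (card (L v)) \<ge> t" using lists vU by blast
    ultimately show "finite (L2 i) \<and> card (L2 i) \<ge> nat (t - 1)"
      using L2v finL[OF vU] by auto
  qed
  then obtain f2 :: "nat \<Rightarrow> nat" where f2: "L_coloring W F L2 f2"
    using ch unfolding choosable_def by blast
  define f where "f = (\<lambda>v. if v \<in> {x,y,z} then col else inv_into C h (f2 (g v)))"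
  have fV: "\<And>v. v \<in> V' \<Longrightarrow> f v \<in> L v - {col}"
  proof -
    fix v assume v: "v \<in> V'"
    have vU: "v \<in> \<Union>P" using v unfolding V'_def by blast
    have "f2 (g v) \<in> L2 (g v)" using f2 v unfolding L_coloring_def W_def by blast
    then obtain a where a: "a \<in> L v - {col}" "f2 (g v) = h a" unfolding L2_def using gi v by auto
    have "inv_into C h (h a) = a" using h LC[OF vU] a(1) by auto
    then show "f v \<in> L v - {col}" using a v unfolding f_def V'_def by auto
  qed
  have "L_coloring (\<Union>P) (cmp_edge P) L f"
    unfolding L_coloring_def proper_coloring_def
  proof (intro conjI ballI impI)
    fix v assume "v \<in> \<Union>P"
    then show "f v \<in> L v" using fV col unfolding V'_def f_def by (cases "v \<in> {x,y,z}") auto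
  next
    fix u v assume uv: "u \<in> \<Union>P" "v \<in> \<Union>P" "cmp_edge P u v"
    show "f u \<noteq> f v"
    proof (cases "u \<in> {x,y,z}")
      case True
      show ?thesis
      proof (cases "v \<in> {x,y,z}")
        case True
        with \<open>u \<in> {x,y,z}\<close> X uv(3) show ?thesis unfolding cmp_edge_def by blast
      next
        case False
        then have "v \<in> V'" using uv unfolding V'_def by blast
        then have "f v \<noteq> col" using fV by blast
        moreover have "f u = col" using True unfolding f_def by simp
        ultimately show ?thesis by simp
      qed
    next
      case False
      then have u': "u \<in> V'" using uv unfolding V'_def by blast
      show ?thesis
      proof (cases "v \<in> {x,y,z}")
        case True
        have "f u \<noteq> col" using fV u' by blast
        moreover have "f v = col" using True unfolding f_def by simp
        ultimately show ?thesis by simp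
      next
        case False
        then have v': "v \<in> V'" using uv unfolding V'_def by blast
        have "F (g u) (g v)" unfolding F_def using u' v' uv(3) by blast
        then have ne: "f2 (g u) \<noteq> f2 (g v)" using f2 u' v' unfolding L_coloring_def proper_coloring_def W_def by blast
        have "f2 (g u) \<in> L2 (g u)" using f2 u' unfolding L_coloring_def W_def by blast
        then obtain a where a: "a \<in> L u - {col}" "f2 (g u) = h a" unfolding L2_def using gi u' by auto
        have "f2 (g v) \<in> L2 (g v)" using f2 v' unfolding L_coloring_def W_def by blast
        then obtain b where b: "b \<in> L v - {col}" "f2 (g v) = h b" unfolding L2_def using gi v' by auto
        have "a \<in> C" using a LC[OF uv(1)] by blast
        then have fu: "f u = a" using a h \<open>u \<notin> {x,y,z}\<close> unfolding f_def by simp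
        have "b \<in> C" using b LC[OF uv(2)] by blast
        then have fv: "f v = b" using b h False unfolding f_def by simp
        show ?thesis using fu fv a b ne by auto
      qed
    qed
  qed
  then show ?thesis by blast
qed



lemma count4:
  assumes f: "finite La" "finite Lb" "finite Lc" "finite Ld"
    and e: "La \<inter> Lb \<inter> Lc = {}" "La \<inter> Lb \<inter> Ld = {}" "La \<inter> Lc \<inter> Ld = {}" "Lb \<inter> Lc \<inter> Ld = {}"
  shows "card La + card Lb + card Lc + card Ld = card (La \<union> Lb \<union> Lc \<union> Ld)
     + (card (La \<inter> Lb) + card (La \<inter> Lc) + card (La \<inter> Ld) + card (Lb \<inter> Lc) + card (Lb \<inter> Ld) + card (Lc \<inter> Ld))"
proof -
  have 1: "card La + card Lb = card (La \<union> Lb) + card (La \<inter> Lb)" using card_Un_Int f by blast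
  have 2: "card (La \<union> Lb) + card Lc = card (La \<union> Lb \<union> Lc) + card ((La \<union> Lb) \<inter> Lc)"
    using card_Un_Int f by (meson finite_UnI)
  have "(La \<union> Lb) \<inter> Lc = (La \<inter> Lc) \<union> (Lb \<inter> Lc)" by blast
  moreover have "card ((La \<inter> Lc) \<union> (Lb \<inter> Lc)) = card (La \<inter> Lc) + card (Lb \<inter> Lc)"
    by (rule card_Un_disjoint) (use f e in auto)
  ultimately have 3: "card ((La \<union> Lb) \<inter> Lc) = card (La \<inter> Lc) + card (Lb \<inter> Lc)" by simp
  have 4: "card (La \<union> Lb \<union> Lc) + card Ld = card (La \<union> Lb \<union> Lc \<union> Ld) + card ((La \<union> Lb \<union> Lc) \<inter> Ld)"
    using card_Un_Int f by (meson finite_UnI)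
  have "(La \<union> Lb \<union> Lc) \<inter> Ld = (La \<inter> Ld) \<union> (Lb \<inter> Ld) \<union> (Lc \<inter> Ld)" by blast
  moreover have "card ((La \<inter> Ld) \<union> (Lb \<inter> Ld) \<union> (Lc \<inter> Ld)) = card ((La \<inter> Ld) \<union> (Lb \<inter> Ld)) + card (Lc \<inter> Ld)"
    by (rule card_Un_disjoint) (use f e in auto)
  moreover have "card ((La \<inter> Ld) \<union> (Lb \<inter> Ld)) = card (La \<inter> Ld) + card (Lb \<inter> Ld)"
    by (rule card_Un_disjoint) (use f e in auto)
  ultimately have 5: "card ((La \<union> Lb \<union> Lc) \<inter> Ld) = card (La \<inter> Ld) + card (Lb \<inter> Ld) + card (Lc \<inter> Ld)" by simp
  show ?thesis using 1 2 3 4 5 by linarith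
qed

lemma gp:
  assumes "card A = 4" "A = {x,y,w,z}" "x \<noteq> y" "x \<noteq> w" "x \<noteq> z" "y \<noteq> w" "y \<noteq> z" "w \<noteq> z"
    and "card (L w \<inter> L z) \<le> card (L x \<inter> L y)"
  shows "good_pair P L A x y"
  unfolding good_pair_def
proof (intro conjI disjI2 allI impI)
  show "x \<in> A" "y \<in> A" "x \<noteq> y" "card A = 4" using assms by auto
  fix w' z' assume "A - {x, y} = {w', z'}"
  moreover have "A - {x,y} = {w,z}" using assms by auto
  ultimately have "(w' = w \<and> z' = z) \<or> (w' = z \<and> z' = w)" by (metis doubleton_eq_iff)
  then show "card (L w' \<inter> L z') \<le> card (L x \<inter> L y)" using assms(9) by (auto simp: Int_commute)
qed

theorem lemma31:
  fixes P :: "'a set set" and L :: "'a \<Rightarrow> 'c set" and n k :: nat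
  assumes part: "partition_of P (\<Union>P)"
    and n_def: "n = card (\<Union>P)"
    and k_def: "k = card P"
    and k1: "k \<ge> 1"
    and nk: "n \<ge> 2 * k + 2"
    and lists: "\<forall>v\<in>\<Union>P. of_nat (card (L v)) \<ge> \<lceil>(real n + real k - 1) / 3\<rceil>"
    and noncol: "\<not> (\<exists>f :: 'a \<Rightarrow> 'c. L_coloring (\<Union>P) (cmp_edge P) L f)"
    and fin_colors: "finite (\<Union>v\<in>\<Union>P. L v)"
    and few_colors: "card (\<Union>v\<in>\<Union>P. L v) \<le> n - 1"
    and minimal: "\<forall>(W :: nat set) F. simple_graph W F \<and> card W < n \<longrightarrow>
        int (choice_number W F) \<le> max (int (chromatic_number W F))
           \<lceil>(real (card W) + real (chromatic_number W F) - 1) / 3\<rceil>"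
    and A: "A \<in> P" "card A = 4"
  shows "card {c. \<exists>u v. good_pair P L A u v \<and> c \<in> L u \<inter> L v}
           \<ge> num_parts P 3 + num_parts P 4"
proof -
  define t where "t = \<lceil>(real n + real k - 1) / 3\<rceil>"
  define C where "C = (\<Union>v\<in>\<Union>P. L v)"
  define S where "S = {c. \<exists>u v. good_pair P L A u v \<and> c \<in> L u \<inter> L v}"
  have lists': "\<forall>v\<in>\<Union>P. of_nat (card (L v)) \<ge> t" using lists by (simp add: t_def)
  have t3: "real_of_int (3 * t) \<ge> real_of_int (int n + int k - 1)"
  proof -
    have "(real n + real k - 1) / 3 \<le> real_of_int t" unfolding t_def by (rule le_of_int_ceiling)
    then show ?thesis by simp
  qed
  then have t3': "3 * t \<ge> int n + int k - 1" by linarith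
  have tk: "t \<ge> int k + 1"
  proof -
    have "real_of_int (int k) < (real n + real k - 1) / 3" using nk by simp
    then have "int k < t" unfolding t_def by (simp add: less_ceiling_iff)
    then show ?thesis by simp
  qed
  have tn: "t - 1 \<ge> \<lceil>(real (n - 3) + real k - 1) / 3\<rceil>"
  proof -
    have "real (n - 3) = real n - 3" using nk k1 by simp
    then have "(real (n - 3) + real k - 1) / 3 = (real n + real k - 1) / 3 - 1" by (simp add: field_simps)
    then have "\<lceil>(real (n - 3) + real k - 1) / 3\<rceil> = \<lceil>(real n + real k - 1) / 3 - 1\<rceil>" by (simp only:)
    also have "\<dots> = t - 1" unfolding t_def by (rule ceiling_diff_one)
    finally show ?thesis by simp
  qed
  have no3: "\<And>x y z col. x \<in> A \<Longrightarrow> y \<in> A \<Longrightarrow> z \<in> A \<Longrightarrow> x \<noteq> y \<Longrightarrow> x \<noteq> z \<Longrightarrow> y \<noteq> z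
      \<Longrightarrow> col \<in> L x \<Longrightarrow> col \<in> L y \<Longrightarrow> col \<in> L z \<Longrightarrow> False"
  proof -
    fix x y z col
    assume "x \<in> A" "y \<in> A" "z \<in> A" "x \<noteq> y" "x \<noteq> z" "y \<noteq> z" "col \<in> L x" "col \<in> L y" "col \<in> L z"
    then have "\<exists>f. L_coloring (\<Union>P) (cmp_edge P) L f"
      using triple_coloring[OF part n_def k_def lists' tk tn fin_colors minimal A(1)] by blast
    with noncol show False by blast
  qed
  obtain a B where aB: "A = insert a B" "a \<notin> B" "card B = 3"
    using A(2) card_Suc_eq[of A 3] by auto
  obtain b c d where bcd: "B = {b,c,d}" "b \<noteq> c" "c \<noteq> d" "b \<noteq> d"
    using aB(3) card_3_iff by metis
  have Aeq: "A = {a,b,c,d}" and dist: "a \<noteq> b" "a \<noteq> c" "a \<noteq> d"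
    using aB bcd by auto
  have inU: "a \<in> \<Union>P" "b \<in> \<Union>P" "c \<in> \<Union>P" "d \<in> \<Union>P" using A(1) Aeq by auto
  have LC: "\<And>v. v \<in> \<Union>P \<Longrightarrow> L v \<subseteq> C" unfolding C_def by blast
  have finC: "finite C" using fin_colors C_def by simp
  have finL: "\<And>v. v \<in> \<Union>P \<Longrightarrow> finite (L v)" using LC finC finite_subset by metis
  have e: "L a \<inter> L b \<inter> L c = {}" "L a \<inter> L b \<inter> L d = {}" "L a \<inter> L c \<inter> L d = {}" "L b \<inter> L c \<inter> L d = {}"
    using no3 Aeq dist bcd by (auto; blast)+
  note cnt = count4[OF finL[OF inU(1)] finL[OF inU(2)] finL[OF inU(3)] finL[OF inU(4)] e]
  define U where "U = L a \<union> L b \<union> L c \<union> L d"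
  have "U \<subseteq> C" unfolding U_def using LC inU by blast
  then have "card U \<le> card C" by (rule card_mono[OF finC])
  moreover have "card C \<le> n - 1" using few_colors unfolding C_def .
  ultimately have cU: "card U \<le> n - 1" by linarith
  have "int (card (L a)) \<ge> t" "int (card (L b)) \<ge> t" "int (card (L c)) \<ge> t" "int (card (L d)) \<ge> t"
    using lists' inU by blast+
  then have sumL: "int (card (L a)) + int (card (L b)) + int (card (L c)) + int (card (L d)) \<ge> 4 * t"
    by linarith
  have gS: "\<And>x y. good_pair P L A x y \<Longrightarrow> L x \<inter> L y \<subseteq> S" unfolding S_def by blast
  define M1 where "M1 = (if card (L c \<inter> L d) \<le> card (L a \<inter> L b) then L a \<inter> L b else L c \<inter> L d)"
  define M2 where "M2 = (if card (L b \<inter> L d) \<le> card (L a \<inter> L c) then L a \<inter> L c else L b \<inter> L d)"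
  define M3 where "M3 = (if card (L b \<inter> L c) \<le> card (L a \<inter> L d) then L a \<inter> L d else L b \<inter> L c)"
  have M1S: "M1 \<subseteq> S"
  proof (cases "card (L c \<inter> L d) \<le> card (L a \<inter> L b)")
    case True
    have "good_pair P L A a b"
    proof (rule gp[OF A(2)])
      show "A = {a, b, c, d}" using Aeq by blast
      show "card (L c \<inter> L d) \<le> card (L a \<inter> L b)" using True by linarith
    qed (use dist bcd in auto)
    then show ?thesis using gS True unfolding M1_def by simp
  next
    case False
    have "good_pair P L A c d"
    proof (rule gp[OF A(2)])
      show "A = {c, d, a, b}" using Aeq by blast
      show "card (L a \<inter> L b) \<le> card (L c \<inter> L d)" using False by linarith
    qed (use dist bcd in auto)
    then show ?thesis using gS False unfolding M1_def by simp
  qed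
  have M2S: "M2 \<subseteq> S"
  proof (cases "card (L b \<inter> L d) \<le> card (L a \<inter> L c)")
    case True
    have "good_pair P L A a c"
    proof (rule gp[OF A(2)])
      show "A = {a, c, b, d}" using Aeq by blast
      show "card (L b \<inter> L d) \<le> card (L a \<inter> L c)" using True by linarith
    qed (use dist bcd in auto)
    then show ?thesis using gS True unfolding M2_def by simp
  next
    case False
    have "good_pair P L A b d"
    proof (rule gp[OF A(2)])
      show "A = {b, d, a, c}" using Aeq by blast
      show "card (L a \<inter> L c) \<le> card (L b \<inter> L d)" using False by linarith
    qed (use dist bcd in auto)
    then show ?thesis using gS False unfolding M2_def by simp
  qed
  have M3S: "M3 \<subseteq> S"
  proof (cases "card (L b \<inter> L c) \<le> card (L a \<inter> L d)")
    case True
    have "good_pair P L A a d"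
    proof (rule gp[OF A(2)])
      show "A = {a, d, b, c}" using Aeq by blast
      show "card (L b \<inter> L c) \<le> card (L a \<inter> L d)" using True by linarith
    qed (use dist bcd in auto)
    then show ?thesis using gS True unfolding M3_def by simp
  next
    case False
    have "good_pair P L A b c"
    proof (rule gp[OF A(2)])
      show "A = {b, c, a, d}" using Aeq by blast
      show "card (L a \<inter> L d) \<le> card (L b \<inter> L c)" using False by linarith
    qed (use dist bcd in auto)
    then show ?thesis using gS False unfolding M3_def by simp
  qed
  have o1: "M1 = L a \<inter> L b \<or> M1 = L c \<inter> L d" unfolding M1_def by simp
  have o2: "M2 = L a \<inter> L c \<or> M2 = L b \<inter> L d" unfolding M2_def by simp
  have o3: "M3 = L a \<inter> L d \<or> M3 = L b \<inter> L c" unfolding M3_def by simp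
  have d12: "M1 \<inter> M2 = {}" using o1 o2 by (elim disjE) (use e in blast)+
  have d13: "M1 \<inter> M3 = {}" using o1 o3 by (elim disjE) (use e in blast)+
  have d23: "M2 \<inter> M3 = {}" using o2 o3 by (elim disjE) (use e in blast)+
  have SC: "S \<subseteq> C" unfolding S_def good_pair_def using A(1) LC by blast
  have finS: "finite S" using SC finC finite_subset by blast
  have fM: "finite M1" "finite M2" "finite M3" using M1S M2S M3S finS finite_subset by blast+
  have "card (M1 \<union> M2 \<union> M3) = card M1 + card M2 + card M3"
    using fM d12 d13 d23 by (simp add: card_Un_disjoint Int_Un_distrib2)
  moreover have "card (M1 \<union> M2 \<union> M3) \<le> card S" using M1S M2S M3S finS by (intro card_mono) auto
  ultimately have cS: "card M1 + card M2 + card M3 \<le> card S" by simp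
  have m1: "2 * card M1 \<ge> card (L a \<inter> L b) + card (L c \<inter> L d)" unfolding M1_def by auto
  have m2: "2 * card M2 \<ge> card (L a \<inter> L c) + card (L b \<inter> L d)" unfolding M2_def by auto
  have m3: "2 * card M3 \<ge> card (L a \<inter> L d) + card (L b \<inter> L c)" unfolding M3_def by auto
  define P3 where "P3 = {X\<in>P. card X = 3}"
  define P4 where "P4 = {X\<in>P. card X = 4}"
  have finU: "finite (\<Union>P)" using part by (simp add: partition_of_def)
  have finP: "finite P" using finU by (simp add: finite_UnionD)
  have disj: "P3 \<inter> P4 = {}" unfolding P3_def P4_def by auto
  have sub: "P3 \<union> P4 \<subseteq> P" unfolding P3_def P4_def by auto
  have fin34: "finite P3" "finite P4" using finP sub finite_subset by auto
  have kb: "num_parts P 3 + num_parts P 4 \<le> k"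
  proof -
    have "card (P3 \<union> P4) = card P3 + card P4" using card_Un_disjoint[OF fin34 disj] .
    moreover have "card (P3 \<union> P4) \<le> card P" using card_mono[OF finP sub] .
    ultimately show ?thesis unfolding num_parts_def P3_def[symmetric] P4_def[symmetric] k_def by simp
  qed
  have nb: "3 * num_parts P 3 + 4 * num_parts P 4 \<le> n"
  proof -
    have pw: "pairwise disjnt P" using part unfolding partition_of_def pairwise_def disjnt_def by blast
    have "n = sum card P" unfolding n_def
      by (rule card_Union_disjoint[OF pw]) (use finU in \<open>auto intro: finite_subset\<close>)
    also have "sum card P \<ge> sum card (P3 \<union> P4)" by (rule sum_mono2[OF finP sub]) auto
    also have "sum card (P3 \<union> P4) = sum card P3 + sum card P4" by (rule sum.union_disjoint[OF fin34 disj])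
    also have "sum card P3 = 3 * card P3" unfolding P3_def by simp
    also have "sum card P4 = 4 * card P4" unfolding P4_def by simp
    finally show ?thesis unfolding num_parts_def P3_def P4_def by simp
  qed
  show ?thesis unfolding S_def[symmetric]
    using cnt cU sumL cS m1 m2 m3 kb nb t3' nk k1 unfolding U_def by linarith
qed

end
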